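(* Let $(D_n)_{n\geq1}$ be a sequence of non-empty finite sets of non-negative real numbers. Let $\ell_n=\min D_n$, $u_n=\max D_n$, $\Delta_n=u_n-\ell_n$, and let $\delta_n$ be the largest gap between consecutive elements of $D_n$ (with $\delta_n=0$ if $|D_n|=1$). Suppose $(u_n)$ is bounded, $\beta>1$, and for every $n\geq1$, $$\delta_n\leq\sum_{i=1}^{\infty}\Delta_{n+i}\,\beta^{-i}.$$ Then $$\Big\{\sum_{n=1}^\infty a_n\beta^{-n} : a_n\in D_n \text{ for all } n\Big\}=\Big[\sum_{n=1}^\infty \ell_n\beta^{-n},\ \sum_{n=1}^\infty u_n\beta^{-n}\Big].$$ *)

theory Defs
  imports "HOL-Analysis.Analysis"
begin

definition max_gap :: "real set \<Rightarrow> real" where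
  "max_gap D = (if card D \<le> 1 then 0 else
     Max {y - x | x y. x \<in> D \<and> y \<in> D \<and> x < y \<and> \<not> (\<exists>z\<in>D. x < z \<and> z < y)})"

end

theory Submission
  imports Defs
begin

lemma geo_aux:
  fixes \<beta> B :: real and c :: "nat \<Rightarrow> real"
  assumes b: "\<beta> > 1" and c: "\<And>i. 0 \<le> c i" "\<And>i. c i \<le> B"
  shows "summable (\<lambda>i. c i / \<beta> ^ Suc i)" "0 \<le> (\<Sum>i. c i / \<beta> ^ Suc i)"
    "(\<Sum>i. c i / \<beta> ^ Suc i) \<le> B / (\<beta> - 1)"
proof -
  have g: "(\<lambda>i. (1/\<beta>) ^ i) sums (1 / (1 - 1/\<beta>))"
    by (rule geometric_sums) (use b in auto)
  have "(\<lambda>i. B/\<beta> * (1/\<beta>) ^ i) sums (B/\<beta> * (1 / (1 - 1/\<beta>)))"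
    by (rule sums_mult[OF g])
  moreover have "B/\<beta> * (1 / (1 - 1/\<beta>)) = B / (\<beta> - 1)"
  proof -
    have "\<beta> * (1 - 1/\<beta>) = \<beta> - 1" using b by (simp add: field_simps)
    then show ?thesis by simp
  qed
  moreover have "(\<lambda>i. B/\<beta> * (1/\<beta>) ^ i) = (\<lambda>i. B / \<beta> ^ Suc i)"
    by (simp add: power_divide)
  ultimately have gs: "(\<lambda>i. B / \<beta> ^ Suc i) sums (B / (\<beta> - 1))" by metis
  have le: "\<And>i. c i / \<beta> ^ Suc i \<le> B / \<beta> ^ Suc i"
    using b c by (intro divide_right_mono) auto
  have nn: "\<And>i. 0 \<le> c i / \<beta> ^ Suc i" using b c by auto
  show s: "summable (\<lambda>i. c i / \<beta> ^ Suc i)"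
  proof (rule summable_comparison_test'[OF sums_summable[OF gs]])
    fix i :: nat
    show "norm (c i / \<beta> ^ Suc i) \<le> B / \<beta> ^ Suc i"
      using le[of i] nn[of i] by simp
  qed
  show "0 \<le> (\<Sum>i. c i / \<beta> ^ Suc i)" using nn s by (simp add: suminf_nonneg)
  show "(\<Sum>i. c i / \<beta> ^ Suc i) \<le> B / (\<beta> - 1)"
    using suminf_le[OF le s sums_summable[OF gs]] sums_unique[OF gs] by simp
qed

theorem lemma2p1:
  fixes D :: "nat \<Rightarrow> real set" and \<beta> :: real
  assumes fin: "\<And>n. n \<ge> 1 \<Longrightarrow> finite (D n)"
    and ne: "\<And>n. n \<ge> 1 \<Longrightarrow> D n \<noteq> {}"
    and nonneg: "\<And>n x. n \<ge> 1 \<Longrightarrow> x \<in> D n \<Longrightarrow> 0 \<le> x"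
    and bdd: "bdd_above ((\<lambda>n. Max (D n)) ` {1..})"
    and beta: "\<beta> > 1"
    and gap: "\<And>n. n \<ge> 1 \<Longrightarrow>
      max_gap (D n) \<le> (\<Sum>i. (Max (D (n + Suc i)) - Min (D (n + Suc i))) / \<beta> ^ Suc i)"
  shows "{(\<Sum>n. a (Suc n) / \<beta> ^ Suc n) | a. \<forall>n\<ge>1. a n \<in> D n}
       = {(\<Sum>n. Min (D (Suc n)) / \<beta> ^ Suc n) .. (\<Sum>n. Max (D (Suc n)) / \<beta> ^ Suc n)}"
proof -
  obtain B where B: "\<And>n. n \<ge> 1 \<Longrightarrow> Max (D n) \<le> B"
    using bdd unfolding bdd_above_def by auto
  define l where "l k = Min (D k)" for k
  define u where "u k = Max (D k)" for k
  have lD: "l n \<in> D n" and uD: "u n \<in> D n" if "n \<ge> 1" for n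
    using fin[OF that] ne[OF that] by (auto simp: l_def u_def)
  have inD: "l n \<le> d \<and> d \<le> u n" if "n \<ge> 1" "d \<in> D n" for n d
    using fin[OF that(1)] that(2) by (auto simp: l_def u_def)
  have l0: "0 \<le> l n" if "n \<ge> 1" for n using nonneg[OF that lD[OF that]] .
  have uB: "u n \<le> B" if "n \<ge> 1" for n using B[OF that] by (simp add: u_def)
  have lu: "l n \<le> u n" if "n \<ge> 1" for n using inD[OF that lD[OF that]] by simp
  have u0: "0 \<le> u n" if "n \<ge> 1" for n using l0[OF that] lu[OF that] by simp
  have lB: "l n \<le> B" if "n \<ge> 1" for n using uB[OF that] lu[OF that] by simp
  define TL where "TL n = (\<Sum>i. l (n + Suc i) / \<beta> ^ Suc i)" for n
  define TU where "TU n = (\<Sum>i. u (n + Suc i) / \<beta> ^ Suc i)" for n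
  note gaL = geo_aux[OF beta, of "\<lambda>i. l (n + Suc i)" B for n]
  note gaU = geo_aux[OF beta, of "\<lambda>i. u (n + Suc i)" B for n]
  have sL: "summable (\<lambda>i. l (n + Suc i) / \<beta> ^ Suc i)" for n
    by (rule gaL(1)) (use l0 lu uB lB u0 in auto)
  have sU: "summable (\<lambda>i. u (n + Suc i) / \<beta> ^ Suc i)" for n
    by (rule gaU(1)) (use l0 lu uB lB u0 in auto)
  have TL0: "0 \<le> TL n" for n unfolding TL_def
    by (rule gaL(2)) (use l0 lu uB lB u0 in auto)
  have TUB: "TU n \<le> B / (\<beta> - 1)" for n unfolding TU_def
    by (rule gaU(3)) (use l0 lu uB lB u0 in auto)
  have rec: "(\<Sum>i. f (n + Suc i) / \<beta> ^ Suc i) = (f (Suc n) + (\<Sum>i. f (Suc n + Suc i) / \<beta> ^ Suc i)) / \<beta>"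
    if s: "\<And>m. summable (\<lambda>i. f (m + Suc i) / \<beta> ^ Suc i)" for f :: "nat \<Rightarrow> real" and n
  proof -
    have h: "(\<Sum>i. f (n + Suc (Suc i)) / \<beta> ^ Suc (Suc i)) = (\<Sum>i. f (n + Suc i) / \<beta> ^ Suc i) - f (n + Suc 0) / \<beta> ^ Suc 0"
      by (rule suminf_split_head[OF s])
    have "(\<lambda>i. f (n + Suc (Suc i)) / \<beta> ^ Suc (Suc i)) = (\<lambda>i. (f (Suc n + Suc i) / \<beta> ^ Suc i) / \<beta>)"
      by (simp add: field_simps)
    then have "(\<Sum>i. f (n + Suc (Suc i)) / \<beta> ^ Suc (Suc i)) = (\<Sum>i. f (Suc n + Suc i) / \<beta> ^ Suc i) / \<beta>"
      using suminf_divide[OF s[of "Suc n"], of \<beta>] by simp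
    with h show ?thesis using beta by (simp add: field_simps)
  qed
  have recL: "TL n = (l (Suc n) + TL (Suc n)) / \<beta>" for n
    unfolding TL_def by (rule rec[OF sL])
  have recU: "TU n = (u (Suc n) + TU (Suc n)) / \<beta>" for n
    unfolding TU_def by (rule rec[OF sU])
  have gapT: "max_gap (D (Suc n)) \<le> TU (Suc n) - TL (Suc n)" for n
  proof -
    have "(\<Sum>i. (Max (D (Suc n + Suc i)) - Min (D (Suc n + Suc i))) / \<beta> ^ Suc i)
        = (\<Sum>i. u (Suc n + Suc i) / \<beta> ^ Suc i - l (Suc n + Suc i) / \<beta> ^ Suc i)"
      by (simp add: u_def l_def diff_divide_distrib)
    also have "\<dots> = TU (Suc n) - TL (Suc n)"
      unfolding TU_def TL_def by (rule suminf_diff[OF sU sL, symmetric])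
    finally show ?thesis using gap[of "Suc n"] by simp
  qed
  have step: "\<exists>a. a \<in> D (Suc n) \<and> TL (Suc n) \<le> \<beta> * R - a \<and> \<beta> * R - a \<le> TU (Suc n)"
    if R: "TL n \<le> R" "R \<le> TU n" for n R
  proof -
    let ?D = "D (Suc n)"
    have f: "finite ?D" using fin by simp
    define t where "t = \<beta> * R - TL (Suc n)"
    have bR1: "l (Suc n) + TL (Suc n) \<le> \<beta> * R" using R(1) recL[of n] beta by (simp add: field_simps)
    have bR2: "\<beta> * R \<le> u (Suc n) + TU (Suc n)" using R(2) recU[of n] beta by (simp add: field_simps)
    define S where "S = {d \<in> ?D. d \<le> t}"
    have Sf: "finite S" using f by (simp add: S_def)
    have lS: "l (Suc n) \<in> S" using lD[of "Suc n"] bR1 by (simp add: S_def t_def)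
    define a where "a = Max S"
    have aS: "a \<in> S" unfolding a_def using Sf lS by (intro Max_in) auto
    have aM: "d \<le> a" if "d \<in> S" for d using Sf that by (simp add: a_def)
    have a1: "a \<in> ?D" "a \<le> t" using aS by (auto simp: S_def)
    have "\<beta> * R - a \<le> TU (Suc n)"
    proof (cases "\<exists>d\<in>?D. d > t")
      case True
      define S2 where "S2 = {d \<in> ?D. t < d}"
      have S2f: "finite S2" "S2 \<noteq> {}" using f True by (auto simp: S2_def)
      define d' where "d' = Min S2"
      have d'S: "d' \<in> S2" using S2f by (simp add: d'_def)
      have d'M: "d' \<le> d" if "d \<in> S2" for d using S2f that by (simp add: d'_def)
      have d'1: "d' \<in> ?D" "t < d'" using d'S by (auto simp: S2_def)
      have nz: "\<not> (\<exists>z\<in>?D. a < z \<and> z < d')"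
      proof
        assume "\<exists>z\<in>?D. a < z \<and> z < d'"
        then obtain z where z: "z \<in> ?D" "a < z" "z < d'" by auto
        show False
        proof (cases "z \<le> t")
          case True then have "z \<le> a" using aM z by (simp add: S_def)
          then show False using z by simp
        next
          case False then have "d' \<le> z" using d'M z by (simp add: S2_def)
          then show False using z by simp
        qed
      qed
      define G where "G = {y - x | x y. x \<in> ?D \<and> y \<in> ?D \<and> x < y \<and> \<not> (\<exists>z\<in>?D. x < z \<and> z < y)}"
      have Gin: "d' - a \<in> G" unfolding G_def using a1 d'1 nz by (intro CollectI exI[of _ a] exI[of _ d']) auto
      have "G \<subseteq> (\<lambda>(x, y). y - x) ` (?D \<times> ?D)" unfolding G_def by auto
      then have Gf: "finite G" using f by (meson finite_SigmaI finite_imageI finite_subset)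
      have "card {a, d'} \<le> card ?D" using a1 d'1 f by (intro card_mono) auto
      then have c2: "\<not> card ?D \<le> 1" using a1 d'1 by auto
      have "max_gap ?D = Max G" unfolding max_gap_def G_def using c2 by simp
      then have "d' - a \<le> max_gap ?D" using Gf Gin by simp
      then have "d' - a \<le> TU (Suc n) - TL (Suc n)" using gapT[of n] by simp
      then show ?thesis using d'1 unfolding t_def by simp
    next
      case False
      then have "u (Suc n) \<in> S" using uD[of "Suc n"] by (auto simp: S_def)
      then have "u (Suc n) \<le> a" by (rule aM)
      then show ?thesis using bR2 by simp
    qed
    moreover have "TL (Suc n) \<le> \<beta> * R - a" using a1 by (simp add: t_def)
    ultimately show ?thesis using a1 by blast
  qed
  show ?thesis
  proof (rule set_eqI, rule iffI)
    fix x assume "x \<in> {(\<Sum>n. a (Suc n) / \<beta> ^ Suc n) | a. \<forall>n\<ge>1. a n \<in> D n}"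
    then obtain a where x: "x = (\<Sum>n. a (Suc n) / \<beta> ^ Suc n)" and a: "\<forall>n\<ge>1. a n \<in> D n" by auto
    have ab: "l (Suc n) \<le> a (Suc n) \<and> a (Suc n) \<le> u (Suc n)" for n
      using inD[of "Suc n" "a (Suc n)"] a by simp
    have sa: "summable (\<lambda>i. a (0 + Suc i) / \<beta> ^ Suc i)"
      by (rule geo_aux(1)[OF beta, of _ B]) (use ab l0 uB in \<open>simp, meson Suc_le_mono le0 order_trans\<close>)+
    have le1: "(\<Sum>n. l (Suc n) / \<beta> ^ Suc n) \<le> (\<Sum>n. a (Suc n) / \<beta> ^ Suc n)"
      using sL[of 0] sa ab beta by (intro suminf_le) (auto intro: divide_right_mono)
    have le2: "(\<Sum>n. a (Suc n) / \<beta> ^ Suc n) \<le> (\<Sum>n. u (Suc n) / \<beta> ^ Suc n)"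
      using sU[of 0] sa ab beta by (intro suminf_le) (auto intro: divide_right_mono)
    show "x \<in> {(\<Sum>n. Min (D (Suc n)) / \<beta> ^ Suc n) .. (\<Sum>n. Max (D (Suc n)) / \<beta> ^ Suc n)}"
      using le1 le2 x by (simp add: l_def u_def)
  next
    fix x assume "x \<in> {(\<Sum>n. Min (D (Suc n)) / \<beta> ^ Suc n) .. (\<Sum>n. Max (D (Suc n)) / \<beta> ^ Suc n)}"
    then have x: "TL 0 \<le> x" "x \<le> TU 0" by (simp_all add: TL_def TU_def l_def u_def)
    define st where "st n r = (SOME a. a \<in> D (Suc n) \<and> TL (Suc n) \<le> \<beta> * r - a \<and> \<beta> * r - a \<le> TU (Suc n))" for n r
    have stP: "st n r \<in> D (Suc n) \<and> TL (Suc n) \<le> \<beta> * r - st n r \<and> \<beta> * r - st n r \<le> TU (Suc n)"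
      if "TL n \<le> r" "r \<le> TU n" for n r
      unfolding st_def by (rule someI_ex[OF step[OF that]])
    define R where "R = rec_nat x (\<lambda>n r. \<beta> * r - st n r)"
    have R0: "R 0 = x" and RS: "R (Suc n) = \<beta> * R n - st n (R n)" for n by (simp_all add: R_def)
    have inv: "TL n \<le> R n \<and> R n \<le> TU n" for n
    proof (induction n)
      case 0 then show ?case using x R0 by simp
    next
      case (Suc n) then show ?case using stP[of n "R n"] RS[of n] by simp
    qed
    define a where "a k = st (k - 1) (R (k - 1))" for k
    have aS: "a (Suc n) = st n (R n)" for n by (simp add: a_def)
    have aD: "\<forall>n\<ge>1. a n \<in> D n"
    proof (intro allI impI)
      fix n :: nat assume "n \<ge> 1"
      then obtain m where m: "n = Suc m" by (cases n) auto
      show "a n \<in> D n" using stP[of m "R m"] inv[of m] unfolding m aS by simp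
    qed
    have id: "x = (\<Sum>k<n. a (Suc k) / \<beta> ^ Suc k) + R n / \<beta> ^ n" for n
    proof (induction n)
      case 0 then show ?case by (simp add: R0)
    next
      case (Suc n)
      have "R (Suc n) / \<beta> ^ Suc n = R n / \<beta> ^ n - a (Suc n) / \<beta> ^ Suc n"
        using beta by (simp add: RS aS field_simps)
      then show ?case using Suc by simp
    qed
    define C where "C = B / (\<beta> - 1)"
    have z: "(\<lambda>n. C * (1/\<beta>) ^ n) \<longlonglongrightarrow> 0"
      by (intro tendsto_mult_right_zero LIMSEQ_power_zero) (use beta in auto)
    have Rz: "(\<lambda>n. R n / \<beta> ^ n) \<longlonglongrightarrow> 0"
    proof (rule tendsto_sandwich[OF _ _ tendsto_const z])
      show "\<forall>\<^sub>F n in sequentially. 0 \<le> R n / \<beta> ^ n"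
        proof (intro always_eventually allI)
        fix n have "0 \<le> R n" using inv[of n] TL0[of n] by linarith
        then show "0 \<le> R n / \<beta> ^ n" using beta by simp
      qed
      show "\<forall>\<^sub>F n in sequentially. R n / \<beta> ^ n \<le> C * (1/\<beta>) ^ n"
      proof (intro always_eventually allI)
        fix n
        have "R n \<le> C" using inv[of n] TUB[of n] by (simp add: C_def)
        then have "R n / \<beta> ^ n \<le> C / \<beta> ^ n" using beta by (intro divide_right_mono) auto
        then show "R n / \<beta> ^ n \<le> C * (1/\<beta>) ^ n" by (simp add: power_divide)
      qed
    qed
    have "(\<lambda>n. x - R n / \<beta> ^ n) \<longlonglongrightarrow> x - 0"
      by (intro tendsto_diff tendsto_const Rz)
    then have "(\<lambda>n. \<Sum>k<n. a (Suc k) / \<beta> ^ Suc k) \<longlonglongrightarrow> x"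
    proof -
      have "(\<lambda>n. x - R n / \<beta> ^ n) = (\<lambda>n. \<Sum>k<n. a (Suc k) / \<beta> ^ Suc k)"
        using id by (metis add_diff_cancel_right')
      then show ?thesis using \<open>(\<lambda>n. x - R n / \<beta> ^ n) \<longlonglongrightarrow> x - 0\<close> by simp
    qed
    then have "(\<lambda>k. a (Suc k) / \<beta> ^ Suc k) sums x" by (simp add: sums_def)
    then have "x = (\<Sum>n. a (Suc n) / \<beta> ^ Suc n)" by (simp add: sums_unique)
    then show "x \<in> {(\<Sum>n. a (Suc n) / \<beta> ^ Suc n) | a. \<forall>n\<ge>1. a n \<in> D n}"
      using aD by blast
  qed
qed

end
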